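(* Let $E$ be a $KB$-space, let $\mathfrak{B}$ be a Boolean subalgebra of $\mathfrak{B}(E)$, let $\xi$ be a forward filtration in $\mathfrak{B}$ and let $T$ be a $\mathfrak{B}$-Volterra operator on $E$. Then for every $k\ge0$: $\iota_{L^k(\xi)}\circ T=\hat{T}_{L^k(\xi)}\circ\iota_{L^k(\xi)}$, $\mathbf{s}\circ\hat{T}_{L^k(\xi)}=\hat{T}_{L^{k+1}(\xi)}\circ\mathbf{s}$ on $\mathcal{M}_b(L^k(\xi))$, and $\mathbf{s}\circ\iota_{L^k(\xi)}=\iota_{L^{k+1}(\xi)}$; all maps are norm continuous operators between Banach lattices. Moreover, if $\hat{T}_\xi\colon\mathcal{M}_b(\xi)\to\mathcal{M}_b(\xi)$ is surjective then $\hat{T}_{L^k(\xi)}$ is open for every $k\ge1$.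
   Context: A $KB$-space is a Banach lattice in which every increasing norm bounded sequence is norm convergent. $\mathfrak{B}(E)$ is the Boolean algebra of all order projections on $E$ ($\pi\le\rho$ iff $\pi\rho=\pi$, zero $\mathbf 0$, unit $\mathbf 1=I_E$). A positive operator $T$ is $\mathfrak{B}$-Volterra if for all $\pi\in\mathfrak{B}$, $x,y\in E$, $\pi x=\pi y$ implies $\pi Tx=\pi Ty$. A forward filtration in $\mathfrak{B}$ is a map $\xi\colon\{0,1,\dots,\infty\}\to\mathfrak{B}$ with $\xi_n\le\xi_{n+1}$, $\xi_0=\mathbf 0$, $\xi_\infty=\mathbf 1$; $L(\xi)_0=\xi_0$, $L(\xi)_n=\xi_{n+1}$ ($n\ge1$), $L^k$ is the $k$-th iterate, $L^0(\xi)=\xi$. $\mathcal{M}_b(\xi)$ is the Banach lattice of sequences $(x_n)_{n\ge1}$ in $E$ with $\xi_nx_m=x_n$ for $m\ge n\ge1$ and $\sup_n\|x_n\|<\infty$ (coordinatewise order, sup norm). $\iota_\xi(x)=(\xi_nx)_{n\ge1}$, $\hat{T}_\xi((x_n))=(\xi_nTx_n)$, $\mathbf{s}((x_n)_{n\ge1})=(x_{n+1})_{n\ge1}$ (mapping $\mathcal{M}_b(\xi)$ to $\mathcal{M}_b(L(\xi))$). *)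

theory Defs
  imports "HOL-Analysis.Analysis"
begin

class banach_lattice = banach + lattice +
  assumes bl_add_left_mono: "x \<le> y \<Longrightarrow> z + x \<le> z + y"
  assumes bl_scaleR_mono: "x \<le> y \<Longrightarrow> 0 \<le> c \<Longrightarrow> c *\<^sub>R x \<le> c *\<^sub>R y"
  assumes bl_norm_mono: "sup x (- x) \<le> sup y (- y) \<Longrightarrow> norm x \<le> norm y"

definition KB_space :: "'a::banach_lattice itself \<Rightarrow> bool" where
  "KB_space _ \<longleftrightarrow>
     (\<forall>x::nat \<Rightarrow> 'a. incseq x \<and> bounded (range x) \<longrightarrow> convergent x)"

definition order_projection :: "('a::banach_lattice \<Rightarrow> 'a) \<Rightarrow> bool" where
  "order_projection \<pi> \<longleftrightarrow> linear \<pi> \<and> \<pi> \<circ> \<pi> = \<pi> \<and>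
     (\<forall>x. 0 \<le> x \<longrightarrow> 0 \<le> \<pi> x \<and> \<pi> x \<le> x)"

definition proj_le :: "('a \<Rightarrow> 'a) \<Rightarrow> ('a \<Rightarrow> 'a) \<Rightarrow> bool" where
  "proj_le \<pi> \<rho> \<longleftrightarrow> \<pi> \<circ> \<rho> = \<pi>"

definition boolean_subalgebra :: "('a::banach_lattice \<Rightarrow> 'a) set \<Rightarrow> bool" where
  "boolean_subalgebra B \<longleftrightarrow>
     (\<forall>\<pi>\<in>B. order_projection \<pi>) \<and> (\<lambda>x. 0) \<in> B \<and> id \<in> B \<and>
     (\<forall>\<pi>\<in>B. \<forall>\<rho>\<in>B. \<pi> \<circ> \<rho> \<in> B) \<and>
     (\<forall>\<pi>\<in>B. \<forall>\<rho>\<in>B. (\<lambda>x. \<pi> x + \<rho> x - \<pi> (\<rho> x)) \<in> B) \<and>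
     (\<forall>\<pi>\<in>B. (\<lambda>x. x - \<pi> x) \<in> B)"

definition positive_operator :: "('a::banach_lattice \<Rightarrow> 'a) \<Rightarrow> bool" where
  "positive_operator T \<longleftrightarrow> linear T \<and> (\<forall>x. 0 \<le> x \<longrightarrow> 0 \<le> T x)"

definition volterra :: "('a::banach_lattice \<Rightarrow> 'a) set \<Rightarrow> ('a \<Rightarrow> 'a) \<Rightarrow> bool" where
  "volterra B T \<longleftrightarrow> positive_operator T \<and>
     (\<forall>\<pi>\<in>B. \<forall>x y. \<pi> x = \<pi> y \<longrightarrow> \<pi> (T x) = \<pi> (T y))"

text \<open>A forward filtration \<xi> : {0,1,...,\<infinity>} \<rightarrow> B. We store \<xi>_n for finite n;
the value \<xi>_\<infinity> is always the identity (which lies in B), so it is not stored.\<close>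
definition forward_filtration ::
  "('a::banach_lattice \<Rightarrow> 'a) set \<Rightarrow> (nat \<Rightarrow> 'a \<Rightarrow> 'a) \<Rightarrow> bool" where
  "forward_filtration B \<xi> \<longleftrightarrow>
     (\<forall>n. \<xi> n \<in> B) \<and> (\<forall>n. proj_le (\<xi> n) (\<xi> (Suc n))) \<and> \<xi> 0 = (\<lambda>x. 0)"

definition Lshift :: "(nat \<Rightarrow> 'a \<Rightarrow> 'a) \<Rightarrow> (nat \<Rightarrow> 'a \<Rightarrow> 'a)" where
  "Lshift \<xi> = (\<lambda>n. if n = 0 then \<xi> 0 else \<xi> (Suc n))"

text \<open>Sequences (x_n)_{n\<ge>1} are represented as functions nat \<Rightarrow> 'a with x 0 = 0.\<close>
definition Mb :: "(nat \<Rightarrow> 'a::banach_lattice \<Rightarrow> 'a) \<Rightarrow> (nat \<Rightarrow> 'a) set" where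
  "Mb \<xi> = {x. x 0 = 0 \<and> (\<forall>n m. 1 \<le> n \<and> n \<le> m \<longrightarrow> \<xi> n (x m) = x n) \<and>
              bounded (range x)}"

definition supnorm :: "(nat \<Rightarrow> 'a::real_normed_vector) \<Rightarrow> real" where
  "supnorm x = (SUP n\<in>{1..}. norm (x n))"

definition iota :: "(nat \<Rightarrow> 'a \<Rightarrow> 'a) \<Rightarrow> 'a \<Rightarrow> (nat \<Rightarrow> 'a)" where
  "iota \<xi> x = (\<lambda>n. \<xi> n x)"

definition hatT :: "('a \<Rightarrow> 'a) \<Rightarrow> (nat \<Rightarrow> 'a \<Rightarrow> 'a) \<Rightarrow> (nat \<Rightarrow> 'a) \<Rightarrow> (nat \<Rightarrow> 'a)" where
  "hatT T \<xi> x = (\<lambda>n. \<xi> n (T (x n)))"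

definition sshift :: "(nat \<Rightarrow> 'a::zero) \<Rightarrow> (nat \<Rightarrow> 'a)" where
  "sshift x = (\<lambda>n. if n = 0 then 0 else x (Suc n))"

definition seq_bounded_op ::
  "(nat \<Rightarrow> 'a::real_normed_vector) set \<Rightarrow> (nat \<Rightarrow> 'a) set \<Rightarrow>
   ((nat \<Rightarrow> 'a) \<Rightarrow> (nat \<Rightarrow> 'a)) \<Rightarrow> bool" where
  "seq_bounded_op A B f \<longleftrightarrow> (\<forall>x\<in>A. f x \<in> B) \<and>
     (\<forall>x\<in>A. \<forall>y\<in>A. \<forall>a b. f (\<lambda>n. a *\<^sub>R x n + b *\<^sub>R y n) = (\<lambda>n. a *\<^sub>R f x n + b *\<^sub>R f y n)) \<and>
     (\<exists>C. \<forall>x\<in>A. supnorm (f x) \<le> C * supnorm x)"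

definition emb_bounded_op ::
  "(nat \<Rightarrow> 'a::real_normed_vector) set \<Rightarrow> ('a \<Rightarrow> (nat \<Rightarrow> 'a)) \<Rightarrow> bool" where
  "emb_bounded_op B f \<longleftrightarrow> (\<forall>x. f x \<in> B) \<and>
     (\<forall>x y a b. f (a *\<^sub>R x + b *\<^sub>R y) = (\<lambda>n. a *\<^sub>R f x n + b *\<^sub>R f y n)) \<and>
     (\<exists>C. \<forall>x. supnorm (f x) \<le> C * norm x)"

definition seq_open_map :: "(nat \<Rightarrow> 'a::real_normed_vector) set \<Rightarrow>
   ((nat \<Rightarrow> 'a) \<Rightarrow> (nat \<Rightarrow> 'a)) \<Rightarrow> bool" where
  "seq_open_map A f \<longleftrightarrow>
     (\<forall>U \<subseteq> A. (\<forall>u\<in>U. \<exists>e>0. \<forall>v\<in>A. supnorm (\<lambda>n. v n - u n) < e \<longrightarrow> v \<in> U) \<longrightarrow>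
        (\<forall>w\<in>f ` U. \<exists>d>0. \<forall>v\<in>A. supnorm (\<lambda>n. v n - w n) < d \<longrightarrow> v \<in> f ` U))"

end

theory Submission
  imports Defs "HOL-Library.Lattice_Algebras"
begin

subclass (in banach_lattice) ordered_ab_group_add
  by standard (rule bl_add_left_mono)

subclass (in banach_lattice) lattice_ab_group_add ..

lemma bl_abs_nonneg: "0 \<le> sup x (- x)" for x :: "'a::banach_lattice"
proof -
  have "x + (- x) \<le> sup x (- x) + sup x (- x)"
    by (intro add_mono) auto
  then show ?thesis by simp
qed

lemma bl_abs_pos: "0 \<le> x \<Longrightarrow> sup x (- x) = x" for x :: "'a::banach_lattice"
  by (metis le_minus_self_iff le_zero_eq sup.orderE sup_commute minus_le_self_iff)

lemma bl_norm_mono_pos: "0 \<le> x \<Longrightarrow> x \<le> y \<Longrightarrow> norm x \<le> norm y" for x y :: "'a::banach_lattice"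
  by (rule bl_norm_mono) (simp add: bl_abs_pos order_trans)

lemma bl_pprt_le_abs: "pprt x \<le> sup x (- x)" for x :: "'a::banach_lattice"
  unfolding pprt_def using bl_abs_nonneg[of x] by (simp add: le_supI1)

lemma bl_nprt_le_abs: "- nprt x \<le> sup x (- x)" for x :: "'a::banach_lattice"
proof -
  have "- nprt x = sup (- x) (- 0)" unfolding nprt_def by (rule neg_inf_eq_sup)
  also have "\<dots> \<le> sup x (- x)" using bl_abs_nonneg[of x] by (auto intro: sup_least)
  finally show ?thesis .
qed

lemma bl_norm_pprt: "norm (pprt x) \<le> norm x" for x :: "'a::banach_lattice"
  by (rule bl_norm_mono) (simp add: bl_abs_pos bl_pprt_le_abs)

lemma bl_norm_nprt: "norm (- nprt x) \<le> norm x" for x :: "'a::banach_lattice"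
proof -
  have "0 \<le> - nprt x" by simp
  then have e: "sup (- nprt x) (- (- nprt x)) = - nprt x" by (rule bl_abs_pos)
  show ?thesis
    by (rule bl_norm_mono) (simp only: e bl_nprt_le_abs)
qed

lemma bl_abs_pos_op:
  fixes x :: "'a::banach_lattice"
  assumes "linear P" "\<And>z. 0 \<le> z \<Longrightarrow> 0 \<le> P z \<and> P z \<le> z"
  shows "norm (P x) \<le> norm x"
proof (rule bl_norm_mono)
  have px: "P x = P (pprt x) - P (- nprt x)"
    using prts[of x] assms(1) by (metis linear_diff diff_minus_eq_add)
  have a: "0 \<le> P (pprt x)" "P (pprt x) \<le> pprt x"
    using assms(2)[of "pprt x"] by auto
  have b: "0 \<le> P (- nprt x)" "P (- nprt x) \<le> - nprt x"
    using assms(2)[of "- nprt x"] by auto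
  have "P x \<le> P (pprt x)" unfolding px using b(1) by simp
  also have "\<dots> \<le> sup x (- x)" using a(2) bl_pprt_le_abs[of x] by (rule order_trans)
  finally have 1: "P x \<le> sup x (- x)" .
  have "- P x = P (- nprt x) - P (pprt x)" unfolding px by simp
  also have "\<dots> \<le> P (- nprt x)" using a(1) by simp
  also have "\<dots> \<le> sup x (- x)" using b(2) bl_nprt_le_abs[of x] by (rule order_trans)
  finally have 2: "- P x \<le> sup x (- x)" .
  show "sup (P x) (- P x) \<le> sup x (- x)" using 1 2 by simp
qed

lemma bl_nprt_norm_le: "0 \<le> y \<Longrightarrow> norm (nprt x) \<le> norm (x - y)" for x y :: "'a::banach_lattice"
proof -
  assume y: "0 \<le> y"
  have "norm (nprt x) = norm (- nprt x)" by simp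
  also have "\<dots> \<le> norm (x - y)"
  proof (rule bl_norm_mono)
    have "- nprt x \<le> sup (x - y) (- (x - y))"
      unfolding nprt_def neg_inf_eq_sup
    proof (rule sup_least)
      have "- x \<le> - (x - y)" using y by simp
      then show "- x \<le> sup (x - y) (- (x - y))" by (simp add: le_supI2)
      show "- 0 \<le> sup (x - y) (- (x - y))" using bl_abs_nonneg[of "x-y"] by simp
    qed
    moreover have "0 \<le> - nprt x" by simp
    ultimately show "sup (- nprt x) (- (- nprt x)) \<le> sup (x - y) (- (x - y))"
      using bl_abs_pos[of "- nprt x"] by simp
  qed
  finally show ?thesis .
qed

lemma bl_closed_cone:
  fixes X :: "nat \<Rightarrow> 'a::banach_lattice"
  assumes "X \<longlonglongrightarrow> x" "eventually (\<lambda>n. 0 \<le> X n) sequentially"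
  shows "0 \<le> x"
proof -
  have "(\<lambda>n. x - X n) \<longlonglongrightarrow> x - x" by (intro tendsto_diff tendsto_const assms(1))
  then have "(\<lambda>n. x - X n) \<longlonglongrightarrow> 0" by simp
  then have lim: "(\<lambda>n. norm (x - X n)) \<longlonglongrightarrow> 0" by (rule tendsto_norm_zero)
  moreover have "eventually (\<lambda>n. norm (nprt x) \<le> norm (x - X n)) sequentially"
    using assms(2) by eventually_elim (rule bl_nprt_norm_le)
  ultimately have "norm (nprt x) \<le> 0"
    by (intro tendsto_le[OF trivial_limit_sequentially lim tendsto_const])
  then have "nprt x = 0" by simp
  then show ?thesis by (simp add: zero_le_iff_zero_nprt)
qed

lemma pos_bounded:
  fixes T :: "'a::banach_lattice \<Rightarrow> 'a"
  assumes lin: "linear T" and pos: "\<And>x. 0 \<le> x \<Longrightarrow> 0 \<le> T x"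
  shows "bounded_linear T"
proof -
  have "\<exists>C. \<forall>x. 0 \<le> x \<longrightarrow> norm (T x) \<le> C * norm x"
  proof (rule ccontr)
    assume "\<not> ?thesis"
    then have "\<forall>n::nat. \<exists>x. 0 \<le> x \<and> norm (T x) > 4^n * norm x"
      by (metis not_le)
    then obtain u where u0: "\<And>n. 0 \<le> u n" and u1: "\<And>n. norm (T (u n)) > 4^n * norm (u n)"
      by metis
    have nz: "norm (u n) > 0" for n
    proof -
      have "u n \<noteq> 0" using u1[of n] lin by (auto simp: linear_0)
      then show ?thesis by simp
    qed
    define v where "v n = (1 / (2^n * norm (u n))) *\<^sub>R u n" for n
    have v0: "0 \<le> v n" for n
    proof -
      have "(1 / (2^n * norm (u n))) *\<^sub>R (0::'a) \<le> (1 / (2^n * norm (u n))) *\<^sub>R u n"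
        by (rule bl_scaleR_mono[OF u0]) (use nz[of n] in simp)
      then show ?thesis by (simp add: v_def)
    qed
    have nv: "norm (v n) = (1/2)^n" for n
      using nz[of n] by (simp add: v_def power_one_over)
    have Tv: "norm (T (v n)) > 2^n" for n
    proof -
      have "norm (T (v n)) = norm (T (u n)) / (2^n * norm (u n))"
        using nz[of n] by (simp add: v_def linear_scale[OF lin])
      moreover have "norm (T (u n)) / (2^n * norm (u n)) > 2^n"
      proof -
        have e: "(2::real)^n * 2^n = 4^n"
          by (simp add: power_mult_distrib[symmetric])
        have e2: "(2::real)^n * (2^n * norm (u n)) = 4^n * norm (u n)"
          by (simp only: mult.assoc[symmetric] e)
        have "2^n * (2^n * norm (u n)) < norm (T (u n))" using u1[of n] e2 by linarith
        then show ?thesis using nz[of n] by (simp add: field_simps)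
      qed
      ultimately show ?thesis by simp
    qed
    have sn: "summable (\<lambda>n. norm (v n))"
      unfolding nv by (rule summable_geometric) simp
    then have sv: "summable v" by (rule summable_norm_cancel)
    define s where "s = suminf v"
    have lim: "(\<lambda>N. sum v {..<N}) \<longlonglongrightarrow> s"
      using sv unfolding s_def by (rule summable_LIMSEQ)
    have ge: "v n \<le> s" for n
    proof -
      have "(\<lambda>N. sum v {..<N} - v n) \<longlonglongrightarrow> s - v n"
        by (intro tendsto_diff lim tendsto_const)
      moreover have "eventually (\<lambda>N. 0 \<le> sum v {..<N} - v n) sequentially"
      proof (rule eventually_sequentiallyI[of "Suc n"])
        fix N assume "Suc n \<le> N"
        then have "n \<in> {..<N}" by simp
        then have "sum v {..<N} = v n + sum v ({..<N} - {n})"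
          by (simp add: sum.remove)
        moreover have "0 \<le> sum v ({..<N} - {n})" by (rule sum_nonneg) (simp add: v0)
        ultimately show "0 \<le> sum v {..<N} - v n" by simp
      qed
      ultimately have "0 \<le> s - v n" by (rule bl_closed_cone)
      then show ?thesis by simp
    qed
    have Ts: "norm (T (v n)) \<le> norm (T s)" for n
    proof (rule bl_norm_mono_pos)
      show "0 \<le> T (v n)" by (rule pos[OF v0])
      have "0 \<le> T (s - v n)" using ge[of n] by (intro pos) simp
      then show "T (v n) \<le> T s" by (simp add: linear_diff[OF lin])
    qed
    moreover obtain n where "norm (T s) < 2^n"
      using real_arch_pow[of 2 "norm (T s)"] by auto
    ultimately show False using Tv[of n] Ts[of n] by linarith
  qed
  then obtain C where C: "\<And>x. 0 \<le> x \<Longrightarrow> norm (T x) \<le> C * norm x" by blast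
  define D where "D = max C 0"
  have D: "0 \<le> x \<Longrightarrow> norm (T x) \<le> D * norm x" for x
  proof -
    assume "0 \<le> x"
    then have "norm (T x) \<le> C * norm x" by (rule C)
    also have "C * norm x \<le> D * norm x" by (rule mult_right_mono) (simp_all add: D_def)
    finally show ?thesis .
  qed
  show ?thesis
  proof (rule bounded_linear_intro[where K = "2 * D"])
    show "T (x + y) = T x + T y" for x y by (rule linear_add[OF lin])
    show "T (r *\<^sub>R x) = r *\<^sub>R T x" for r x by (rule linear_scale[OF lin])
    fix x
    have "T x = T (pprt x) - T (- nprt x)"
      using prts[of x] by (metis lin linear_diff diff_minus_eq_add)
    then have "norm (T x) \<le> norm (T (pprt x)) + norm (T (- nprt x))"
      by (metis norm_triangle_ineq4)
    also have "\<dots> \<le> D * norm (pprt x) + D * norm (- nprt x)"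
      by (intro add_mono D) auto
    also have "\<dots> \<le> D * norm x + D * norm x"
      by (intro add_mono mult_left_mono bl_norm_pprt bl_norm_nprt) (auto simp: D_def)
    finally show "norm (T x) \<le> norm x * (2 * D)" by (simp add: algebra_simps)
  qed
qed

lemma omt_bound:
  fixes f :: "'v::banach \<Rightarrow> 'v"
  assumes bl: "bounded_linear f" and cX: "closed X" and sX: "subspace X" and fX: "f ` X = X"
  shows "\<exists>c>0. \<forall>y\<in>X. \<exists>x\<in>X. f x = y \<and> norm x \<le> c * norm y"
proof -
  interpret f: bounded_linear f by (rule bl)
  define A where "A n = X \<inter> closure (f ` (X \<inter> cball 0 (real n)))" for n :: nat
  have "\<exists>n y0 r. r > 0 \<and> y0 \<in> X \<and> X \<inter> ball y0 r \<subseteq> closure (f ` (X \<inter> cball 0 (real n)))"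
  proof (rule ccontr)
    assume H: "\<not> ?thesis"
    have "top_of_set X interior_of \<Union>(range A) = {}"
    proof (rule Baire_category_alt)
      show "completely_metrizable_space (top_of_set X) \<or>
            locally_compact_space (top_of_set X) \<and> regular_space (top_of_set X)"
      proof (rule disjI1)
        have "closedin euclidean X" using cX by (simp only: closed_closedin)
        then show "completely_metrizable_space (top_of_set X)"
          by (intro completely_metrizable_space_closedin completely_metrizable_space_euclidean)
      qed
      show "countable (range A)" by simp
      fix T assume "T \<in> range A"
      then obtain n where T: "T = A n" by auto
      show "closedin (top_of_set X) T \<and> top_of_set X interior_of T = {}"
      proof
        show "closedin (top_of_set X) T" unfolding T A_def by (rule closedin_closed_Int) simp
        show "top_of_set X interior_of T = {}"
        proof (rule ccontr)
          assume "top_of_set X interior_of T \<noteq> {}"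
          then obtain y0 where "y0 \<in> top_of_set X interior_of T" by blast
          then obtain U where U: "openin (top_of_set X) U" "y0 \<in> U" "U \<subseteq> T"
            unfolding interior_of_def by auto
          then obtain e where e: "e > 0" "ball y0 e \<inter> X \<subseteq> U"
            unfolding openin_contains_ball by blast
          have "y0 \<in> X" using U(1,2) openin_imp_subset by fastforce
          moreover have "X \<inter> ball y0 e \<subseteq> closure (f ` (X \<inter> cball 0 (real n)))"
            using e(2) U(3) unfolding T A_def by blast
          ultimately have "\<exists>n y0 r. r > 0 \<and> y0 \<in> X \<and> X \<inter> ball y0 r \<subseteq> closure (f ` (X \<inter> cball 0 (real n)))"
            using e(1) by blast
          with H show False by (rule notE)
        qed
      qed
    qed
    moreover have "\<Union>(range A) = X"
    proof
      show "\<Union>(range A) \<subseteq> X" unfolding A_def by blast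
      show "X \<subseteq> \<Union>(range A)"
      proof
        fix y assume "y \<in> X"
        then obtain x where x: "x \<in> X" "y = f x" using fX by blast
        have nx: "norm x \<le> real (nat \<lceil>norm x\<rceil>)" by linarith
        have "x \<in> X \<inter> cball 0 (real (nat \<lceil>norm x\<rceil>))"
          by (rule IntI[OF x(1)]) (simp only: mem_cball_0 nx)
        then have "y \<in> f ` (X \<inter> cball 0 (real (nat \<lceil>norm x\<rceil>)))"
          using x(2) by (rule rev_image_eqI)
        then have "y \<in> closure (f ` (X \<inter> cball 0 (real (nat \<lceil>norm x\<rceil>))))"
          by (rule subsetD[OF closure_subset])
        then have "y \<in> A (nat \<lceil>norm x\<rceil>)"
          unfolding A_def using \<open>y \<in> X\<close> by (rule IntI[rotated])
        then show "y \<in> \<Union>(range A)" by blast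
      qed
    qed
    moreover have "top_of_set X interior_of X = X"
      using interior_of_topspace[of "top_of_set X"] by (simp only: topspace_euclidean_subtopology)
    ultimately have "X = {}" by simp
    moreover have "0 \<in> X" using sX by (rule subspace_0)
    ultimately show False by simp
  qed
  then obtain n y0 r where r: "r > 0" and y0: "y0 \<in> X"
    and ball: "X \<inter> ball y0 r \<subseteq> closure (f ` (X \<inter> cball 0 (real n)))" by blast
  have approx: "\<exists>x\<in>X. norm x \<le> 2 * real n \<and> norm (f x - y) < e"
    if y: "y \<in> X" "norm y < r" and e: "e > 0" for y e
  proof -
    have "y0 + y \<in> X \<inter> ball y0 r"
      using y y0 sX by (simp add: subspace_add dist_norm)
    then have "y0 + y \<in> closure (f ` (X \<inter> cball 0 (real n)))" using ball by blast
    then have "\<forall>\<epsilon>>0. \<exists>z\<in>X \<inter> cball 0 (real n). dist (f z) (y0 + y) < \<epsilon>"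
      unfolding closure_approachable by simp
    then have "\<exists>z\<in>X \<inter> cball 0 (real n). dist (f z) (y0 + y) < e/2"
      using e half_gt_zero by blast
    then obtain x1 where x1a: "x1 \<in> X \<inter> cball 0 (real n)" and x1b: "dist (f x1) (y0 + y) < e/2"
      by blast
    have x1: "x1 \<in> X" "norm x1 \<le> real n" "dist (f x1) (y0 + y) < e/2" using x1a x1b by auto
    have "y0 \<in> X \<inter> ball y0 r" using y0 r by simp
    then have "y0 \<in> closure (f ` (X \<inter> cball 0 (real n)))" using ball by blast
    then have "\<forall>\<epsilon>>0. \<exists>z\<in>X \<inter> cball 0 (real n). dist (f z) y0 < \<epsilon>"
      unfolding closure_approachable by simp
    then have "\<exists>z\<in>X \<inter> cball 0 (real n). dist (f z) y0 < e/2"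
      using e half_gt_zero by blast
    then obtain x2 where x2a: "x2 \<in> X \<inter> cball 0 (real n)" and x2b: "dist (f x2) y0 < e/2"
      by blast
    have x2: "x2 \<in> X" "norm x2 \<le> real n" "dist (f x2) y0 < e/2" using x2a x2b by auto
    show ?thesis
    proof (intro bexI conjI)
      show "x1 - x2 \<in> X" using sX x1 x2 by (simp add: subspace_diff)
      show "norm (x1 - x2) \<le> 2 * real n"
        using norm_triangle_ineq4[of x1 x2] x1 x2 by linarith
      have "f (x1 - x2) - y = (f x1 - (y0 + y)) - (f x2 - y0)"
        by (simp add: f.diff algebra_simps)
      then have "norm (f (x1 - x2) - y) \<le> norm (f x1 - (y0 + y)) + norm (f x2 - y0)"
        by (simp only: norm_triangle_ineq4)
      then show "norm (f (x1 - x2) - y) < e"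
        using x1(3) x2(3) by (simp add: dist_norm)
    qed
  qed
  define K where "K = 4 * real n / r + 1"
  have Kpos: "K > 0" unfolding K_def using r by (simp add: add_nonneg_pos)
  have approx2: "\<exists>x\<in>X. norm x \<le> K * norm y \<and> norm (f x - y) < e"
    if y: "y \<in> X" and e: "e > 0" for y e
  proof (cases "y = 0")
    case True
    then show ?thesis using sX e by (intro bexI[of _ 0]) (auto simp: subspace_0 f.zero)
  next
    case False
    define t where "t = r / (2 * norm y)"
    have t: "t > 0" using False r by (simp add: t_def)
    have ny: "norm (t *\<^sub>R y) = r / 2" using False t r by (simp add: t_def)
    obtain x' where x': "x' \<in> X" "norm x' \<le> 2 * real n" "norm (f x' - t *\<^sub>R y) < e * t"
      using approx[of "t *\<^sub>R y" "e * t"] y sX r ny e t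
      by (auto simp: subspace_scale[of X y t, simplified])
    show ?thesis
    proof (intro bexI conjI)
      show "(1/t) *\<^sub>R x' \<in> X" using sX x' by (simp add: subspace_scale[of X, simplified])
      have "norm ((1/t) *\<^sub>R x') = norm x' / t" using t by simp
      also have "\<dots> \<le> 2 * real n / t" using x' t by (simp add: divide_right_mono)
      also have "\<dots> = 4 * real n / r * norm y" using False r by (simp add: t_def field_simps)
      also have "\<dots> \<le> K * norm y" unfolding K_def by (simp add: distrib_right)
      finally show "norm ((1/t) *\<^sub>R x') \<le> K * norm y" .
      have "f ((1/t) *\<^sub>R x') - y = (1/t) *\<^sub>R (f x' - t *\<^sub>R y)"
        using t by (simp add: f.scaleR algebra_simps)
      then have "norm (f ((1/t) *\<^sub>R x') - y) = norm (f x' - t *\<^sub>R y) / t"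
        using t by simp
      also have "\<dots> < e" using x'(3) t by (simp add: field_simps)
      finally show "norm (f ((1/t) *\<^sub>R x') - y) < e" .
    qed
  qed
  define g where "g z e = (SOME x. x \<in> X \<and> norm x \<le> K * norm z \<and> norm (f x - z) < e)" for z e
  have g: "g z e \<in> X \<and> norm (g z e) \<le> K * norm z \<and> norm (f (g z e) - z) < e"
    if "z \<in> X" "e > 0" for z e
  proof -
    have "\<exists>x. x \<in> X \<and> norm x \<le> K * norm z \<and> norm (f x - z) < e"
      using approx2[OF that] by blast
    then show ?thesis unfolding g_def by (rule someI_ex)
  qed
  show ?thesis
  proof (intro exI[of _ "2 * K"] conjI ballI)
    show "2 * K > 0" using Kpos by simp
    fix y assume y: "y \<in> X"
    show "\<exists>x\<in>X. f x = y \<and> norm x \<le> 2 * K * norm y"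
    proof (cases "y = 0")
      case True
      then show ?thesis using sX by (intro bexI[of _ 0]) (auto simp: subspace_0 f.zero)
    next
      case False
      define a where "a = norm y"
      have a: "a > 0" using False by (simp add: a_def)
      define R where "R = rec_nat y (\<lambda>k z. z - f (g z (a * (1/2)^Suc k)))"
      have R0: "R 0 = y" by (simp add: R_def)
      have RS: "R (Suc k) = R k - f (g (R k) (a * (1/2)^Suc k))" for k by (simp add: R_def)
      define x where "x k = g (R k) (a * (1/2)^Suc k)" for k
      have RS': "R (Suc k) = R k - f (x k)" for k by (simp only: RS x_def)
      have RX: "R k \<in> X \<and> norm (R k) \<le> a * (1/2)^k" for k
      proof (induction k)
        case 0
        then show ?case using y by (simp add: R0 a_def)
      next
        case (Suc k)
        have gk: "x k \<in> X" "norm (f (x k) - R k) < a * (1/2)^Suc k"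
          using g[of "R k" "a * (1/2)^Suc k"] Suc a unfolding x_def by auto
        have "f (x k) \<in> X" using gk fX by blast
        then have "R (Suc k) \<in> X" using Suc sX by (simp add: RS' subspace_diff)
        moreover have "norm (R (Suc k)) = norm (f (x k) - R k)"
          by (simp add: RS' norm_minus_commute)
        ultimately show ?case using gk by simp
      qed
      have xX: "x k \<in> X" and xn: "norm (x k) \<le> K * a * (1/2)^k" for k
      proof -
        have "x k \<in> X \<and> norm (x k) \<le> K * norm (R k)"
          using g[of "R k" "a * (1/2)^Suc k"] RX[of k] a unfolding x_def by auto
        moreover have "K * norm (R k) \<le> K * (a * (1/2)^k)"
          using RX[of k] Kpos by (intro mult_left_mono) auto
        ultimately show "x k \<in> X" "norm (x k) \<le> K * a * (1/2)^k" by (auto simp: mult.assoc)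
      qed
      have sg: "summable (\<lambda>k. K * a * (1/2::real)^k)"
        by (intro summable_mult summable_geometric) simp
      have sx: "summable x"
        by (rule summable_comparison_test'[OF sg xn])
      define s where "s = suminf x"
      have lim: "(\<lambda>N. sum x {..<N}) \<longlonglongrightarrow> s" unfolding s_def using sx by (rule summable_LIMSEQ)
      show ?thesis
      proof (intro bexI conjI)
        show "s \<in> X"
          by (rule closed_sequentially[OF cX _ lim]) (use sX xX in \<open>simp add: subspace_sum\<close>)
        have "norm s \<le> (\<Sum>k. K * a * (1/2::real)^k)"
          unfolding s_def by (rule norm_suminf_le[OF xn sg])
        also have "\<dots> = 2 * K * a"
          by (simp add: suminf_mult suminf_geometric)
        finally show "norm s \<le> 2 * K * norm y" by (simp add: a_def)
        have fP: "f (sum x {..<N}) = y - R N" for N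
        proof (induction N)
          case 0 then show ?case by (simp add: R0 f.zero)
        next
          case (Suc N) then show ?case by (simp add: f.add RS')
        qed
        have "(\<lambda>N. f (sum x {..<N})) \<longlonglongrightarrow> f s" by (rule f.tendsto[OF lim])
        moreover have "(\<lambda>N. f (sum x {..<N})) \<longlonglongrightarrow> y"
        proof -
          have "(\<lambda>N. (1/2::real)^N) \<longlonglongrightarrow> 0" by (rule LIMSEQ_power_zero) simp
          then have "(\<lambda>N. a * (1/2::real)^N) \<longlonglongrightarrow> a * 0" by (rule tendsto_mult_left)
          then have l0: "(\<lambda>N. a * (1/2::real)^N) \<longlonglongrightarrow> 0" by simp
          have ev: "eventually (\<lambda>N. norm (R N) \<le> a * (1/2)^N) sequentially"
            using RX by (intro always_eventually allI) blast
          have "R \<longlonglongrightarrow> 0" by (rule Lim_null_comparison[OF ev l0])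
          then have "(\<lambda>N. y - R N) \<longlonglongrightarrow> y - 0" by (intro tendsto_diff tendsto_const)
          then show ?thesis by (simp add: fP)
        qed
        ultimately show "f s = y" by (rule LIMSEQ_unique)
      qed
    qed
  qed
qed

section \<open>Projections and filtrations\<close>

lemma B_proj:
  assumes "boolean_subalgebra B" "\<pi> \<in> B"
  shows "linear \<pi>" "\<pi> (\<pi> x) = \<pi> x" "norm (\<pi> x) \<le> norm x" "bounded_linear \<pi>"
proof -
  have op: "order_projection \<pi>" using assms unfolding boolean_subalgebra_def by blast
  then show lin: "linear \<pi>" unfolding order_projection_def by blast
  show "\<pi> (\<pi> x) = \<pi> x" using op unfolding order_projection_def by (metis comp_apply)
  have pos: "\<And>z. 0 \<le> z \<Longrightarrow> 0 \<le> \<pi> z \<and> \<pi> z \<le> z" using op unfolding order_projection_def by blast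
  show "norm (\<pi> x) \<le> norm x" by (rule bl_abs_pos_op[OF lin pos])
  show "bounded_linear \<pi>"
  proof (rule bounded_linear_intro[where K=1])
    show "\<pi> (x + y) = \<pi> x + \<pi> y" for x y by (rule linear_add[OF lin])
    show "\<pi> (r *\<^sub>R x) = r *\<^sub>R \<pi> x" for r x by (rule linear_scale[OF lin])
    show "norm (\<pi> x) \<le> norm x * 1" for x using bl_abs_pos_op[OF lin pos, of x] by simp
  qed
qed

lemma ff_Lshift: "forward_filtration B \<xi> \<Longrightarrow> forward_filtration B (Lshift \<xi>)"
  unfolding forward_filtration_def Lshift_def proj_le_def by (auto simp: comp_def fun_eq_iff)

lemma ff_Lshift_pow: "forward_filtration B \<xi> \<Longrightarrow> forward_filtration B ((Lshift ^^ k) \<xi>)"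
  by (induction k) (auto intro: ff_Lshift)

lemma ff_zero: "forward_filtration B \<xi> \<Longrightarrow> \<xi> 0 x = 0"
  unfolding forward_filtration_def by simp

lemma ff_in: "forward_filtration B \<xi> \<Longrightarrow> \<xi> n \<in> B"
  unfolding forward_filtration_def by simp

lemma ff_compat:
  assumes "forward_filtration B \<xi>" "boolean_subalgebra B" "n \<le> m"
  shows "\<xi> n (\<xi> m x) = \<xi> n x"
  using assms(3)
proof (induction m arbitrary: x rule: dec_induct)
  case base
  then show ?case using B_proj(2)[OF assms(2) ff_in[OF assms(1)]] by simp
next
  case (step m)
  have pl: "\<xi> m (\<xi> (Suc m) y) = \<xi> m y" for y
    using assms(1) unfolding forward_filtration_def proj_le_def by (metis comp_apply)
  have "\<xi> n (\<xi> (Suc m) x) = \<xi> n (\<xi> m (\<xi> (Suc m) x))" using step.IH by simp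
  also have "\<dots> = \<xi> n (\<xi> m x)" by (simp add: pl)
  also have "\<dots> = \<xi> n x" by (rule step.IH)
  finally show ?case .
qed

section \<open>Sup norm\<close>

lemma bounded_range_normD:
  "bounded (range (x :: nat \<Rightarrow> 'b::real_normed_vector)) \<Longrightarrow> \<exists>M. \<forall>n. norm (x n) \<le> M"
  unfolding bounded_iff by auto

lemma supnorm_upper:
  fixes x :: "nat \<Rightarrow> 'b::real_normed_vector"
  assumes "bounded (range x)" "1 \<le> n"
  shows "norm (x n) \<le> supnorm x"
proof -
  obtain M where M: "\<And>n. norm (x n) \<le> M" using bounded_range_normD[OF assms(1)] by blast
  have "bdd_above ((\<lambda>n. norm (x n)) ` {1..})" by (rule bdd_aboveI2[where M=M]) (rule M)
  then show ?thesis unfolding supnorm_def using assms(2) by (intro cSUP_upper) auto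
qed

lemma supnorm_least:
  fixes x :: "nat \<Rightarrow> 'b::real_normed_vector"
  assumes "\<And>n. 1 \<le> n \<Longrightarrow> norm (x n) \<le> b"
  shows "supnorm x \<le> b"
  unfolding supnorm_def by (rule cSUP_least) (use assms in auto)

lemma supnorm_nonneg:
  fixes x :: "nat \<Rightarrow> 'b::real_normed_vector"
  assumes "bounded (range x)"
  shows "0 \<le> supnorm x"
  using supnorm_upper[OF assms, of 1] norm_ge_zero[of "x 1"] by linarith

lemma bounded_rangeI:
  fixes x :: "nat \<Rightarrow> 'b::real_normed_vector"
  shows "(\<And>n. norm (x n) \<le> M) \<Longrightarrow> bounded (range x)"
  unfolding bounded_iff by auto

section \<open>Mb\<close>

lemma MbD:
  assumes "x \<in> Mb \<xi>"
  shows "x 0 = 0" "1 \<le> n \<Longrightarrow> n \<le> m \<Longrightarrow> \<xi> n (x m) = x n" "bounded (range x)"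
  using assms unfolding Mb_def by auto

lemma MbD2:
  assumes "x \<in> Mb \<xi>" "1 \<le> n"
  shows "\<xi> n (x n) = x n"
  using MbD(2)[OF assms(1) assms(2)] by simp

lemma Mb_lin:
  assumes ff: "forward_filtration B \<xi>" and bs: "boolean_subalgebra B"
    and x: "x \<in> Mb \<xi>" and y: "y \<in> Mb \<xi>"
  shows "(\<lambda>n. a *\<^sub>R x n + b *\<^sub>R y n) \<in> Mb \<xi>"
proof -
  have lin: "linear (\<xi> n)" for n using B_proj(1)[OF bs ff_in[OF ff]] .
  have bd: "bounded (range (\<lambda>n. a *\<^sub>R x n + b *\<^sub>R y n))"
    using MbD(3)[OF x] MbD(3)[OF y]
    by (intro bounded_plus_comp bounded_scaleR_comp) auto
  have c: "\<xi> n (a *\<^sub>R x m + b *\<^sub>R y m) = a *\<^sub>R x n + b *\<^sub>R y n" if "1 \<le> n" "n \<le> m" for n m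
    using MbD(2)[OF x that] MbD(2)[OF y that] by (simp add: linear_add[OF lin] linear_scale[OF lin])
  have z: "a *\<^sub>R x 0 + b *\<^sub>R y 0 = 0" using MbD(1)[OF x] MbD(1)[OF y] by simp
  show ?thesis unfolding Mb_def mem_Collect_eq
  proof (intro conjI allI impI)
    show "a *\<^sub>R x 0 + b *\<^sub>R y 0 = 0" by (rule z)
    fix n m :: nat assume "1 \<le> n \<and> n \<le> m"
    then show "\<xi> n (a *\<^sub>R x m + b *\<^sub>R y m) = a *\<^sub>R x n + b *\<^sub>R y n" using c by simp
  qed (rule bd)
qed

lemma Mb_diff:
  assumes ff: "forward_filtration B \<xi>" and bs: "boolean_subalgebra B"
    and x: "x \<in> Mb \<xi>" and y: "y \<in> Mb \<xi>"
  shows "(\<lambda>n. x n - y n) \<in> Mb \<xi>"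
  using Mb_lin[OF ff bs x y, of 1 "-1"] by simp

lemma Mb_add:
  assumes ff: "forward_filtration B \<xi>" and bs: "boolean_subalgebra B"
    and x: "x \<in> Mb \<xi>" and y: "y \<in> Mb \<xi>"
  shows "(\<lambda>n. x n + y n) \<in> Mb \<xi>"
  using Mb_lin[OF ff bs x y, of 1 1] by simp

lemma Mb_zero:
  assumes ff: "forward_filtration B \<xi>" and bs: "boolean_subalgebra B"
  shows "(\<lambda>n. 0) \<in> Mb \<xi>"
proof -
  have lin: "linear (\<xi> n)" for n using B_proj(1)[OF bs ff_in[OF ff]] .
  have "bounded (range (\<lambda>n::nat. 0::'a))" by (rule bounded_rangeI[where M=0]) simp
  moreover have "\<xi> n 0 = 0" for n by (rule linear_0[OF lin])
  ultimately show ?thesis unfolding Mb_def mem_Collect_eq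
    by (intro conjI allI impI) auto
qed

lemma volterraD:
  "volterra B T \<Longrightarrow> \<pi> \<in> B \<Longrightarrow> \<pi> x = \<pi> y \<Longrightarrow> \<pi> (T x) = \<pi> (T y)"
  unfolding volterra_def by blast

lemma volterra_bl: "volterra B T \<Longrightarrow> bounded_linear T"
  unfolding volterra_def positive_operator_def by (intro pos_bounded) auto

lemma volterra_lin: "volterra B T \<Longrightarrow> linear T"
  unfolding volterra_def positive_operator_def by auto

locale setting =
  fixes B :: "('a::banach_lattice \<Rightarrow> 'a) set" and \<zeta> :: "nat \<Rightarrow> 'a \<Rightarrow> 'a" and T :: "'a \<Rightarrow> 'a"
  assumes bs: "boolean_subalgebra B" and ff: "forward_filtration B \<zeta>" and vt: "volterra B T"
begin

lemma linz: "linear (\<zeta> n)" by (rule B_proj(1)[OF bs ff_in[OF ff]])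
lemma idz: "\<zeta> n (\<zeta> n x) = \<zeta> n x" by (rule B_proj(2)[OF bs ff_in[OF ff]])
lemma normz: "norm (\<zeta> n x) \<le> norm x" by (rule B_proj(3)[OF bs ff_in[OF ff]])
lemma blz: "bounded_linear (\<zeta> n)" by (rule B_proj(4)[OF bs ff_in[OF ff]])
lemma z0: "\<zeta> 0 x = 0" by (rule ff_zero[OF ff])
lemma compat: "n \<le> m \<Longrightarrow> \<zeta> n (\<zeta> m x) = \<zeta> n x" by (rule ff_compat[OF ff bs])
lemma linT: "linear T" by (rule volterra_lin[OF vt])
lemma blT: "bounded_linear T" by (rule volterra_bl[OF vt])

lemma G1: "iota \<zeta> (T x) = hatT T \<zeta> (iota \<zeta> x)"
  unfolding iota_def hatT_def
proof
  fix n
  have "\<zeta> n x = \<zeta> n (\<zeta> n x)" by (simp add: idz)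
  then show "\<zeta> n (T x) = \<zeta> n (T (\<zeta> n x))" by (rule volterraD[OF vt ff_in[OF ff]])
qed

lemma G2: "sshift (hatT T \<zeta> x) = hatT T (Lshift \<zeta>) (sshift x)"
  unfolding sshift_def hatT_def Lshift_def by (auto simp: z0 fun_eq_iff)

lemma G3: "sshift (iota \<zeta> x) = iota (Lshift \<zeta>) x"
  unfolding sshift_def iota_def Lshift_def by (auto simp: z0 fun_eq_iff)

lemma iota_Mb: "iota \<zeta> x \<in> Mb \<zeta>"
proof -
  have b: "bounded (range (iota \<zeta> x))"
    by (rule bounded_rangeI[where M = "norm x"]) (simp add: iota_def normz)
  show ?thesis unfolding Mb_def mem_Collect_eq
  proof (intro conjI allI impI)
    show "iota \<zeta> x 0 = 0" by (simp add: iota_def z0)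
    fix n m :: nat assume "1 \<le> n \<and> n \<le> m"
    then show "\<zeta> n (iota \<zeta> x m) = iota \<zeta> x n" by (simp add: iota_def compat)
  qed (rule b)
qed

lemma G5: "emb_bounded_op (Mb \<zeta>) (iota \<zeta>)"
  unfolding emb_bounded_op_def
proof (intro conjI allI exI)
  show "iota \<zeta> x \<in> Mb \<zeta>" for x by (rule iota_Mb)
  show "iota \<zeta> (a *\<^sub>R x + b *\<^sub>R y) = (\<lambda>n. a *\<^sub>R iota \<zeta> x n + b *\<^sub>R iota \<zeta> y n)" for x y a b
    by (simp add: iota_def linear_add[OF linz] linear_scale[OF linz])
  show "supnorm (iota \<zeta> x) \<le> 1 * norm x" for x
    by (simp add: supnorm_least iota_def normz)
qed

lemma Kex: "\<exists>K>0. \<forall>x. norm (T x) \<le> norm x * K"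
  by (rule bounded_linear.pos_bounded[OF blT])

lemma hatT_Mb: assumes x: "x \<in> Mb \<zeta>" shows "hatT T \<zeta> x \<in> Mb \<zeta>"
proof -
  obtain K where K: "K > 0" "\<And>x. norm (T x) \<le> norm x * K" using Kex by blast
  obtain M where M: "\<And>n. norm (x n) \<le> M" using bounded_range_normD[OF MbD(3)[OF x]] by blast
  have b: "bounded (range (hatT T \<zeta> x))"
  proof (rule bounded_rangeI[where M = "M * K"])
    fix n
    have "norm (hatT T \<zeta> x n) \<le> norm (T (x n))" by (simp add: hatT_def normz)
    also have "\<dots> \<le> norm (x n) * K" by (rule K(2))
    also have "\<dots> \<le> M * K" using M[of n] K(1) by (simp add: mult_right_mono)
    finally show "norm (hatT T \<zeta> x n) \<le> M * K" .
  qed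
  show ?thesis unfolding Mb_def mem_Collect_eq
  proof (intro conjI allI impI)
    show "hatT T \<zeta> x 0 = 0" by (simp add: hatT_def z0)
    fix n m :: nat assume nm: "1 \<le> n \<and> n \<le> m"
    have "\<zeta> n (x m) = \<zeta> n (x n)" using MbD(2)[OF x] MbD2[OF x] nm by simp
    then have "\<zeta> n (T (x m)) = \<zeta> n (T (x n))" by (rule volterraD[OF vt ff_in[OF ff]])
    then show "\<zeta> n (hatT T \<zeta> x m) = hatT T \<zeta> x n" using nm by (simp add: hatT_def compat)
  qed (rule b)
qed

lemma G6: "seq_bounded_op (Mb \<zeta>) (Mb \<zeta>) (hatT T \<zeta>)"
  unfolding seq_bounded_op_def
proof (intro conjI ballI allI)
  obtain K where K: "K > 0" "\<And>x. norm (T x) \<le> norm x * K" using Kex by blast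
  show "hatT T \<zeta> x \<in> Mb \<zeta>" if "x \<in> Mb \<zeta>" for x using that by (rule hatT_Mb)
  show "hatT T \<zeta> (\<lambda>n. a *\<^sub>R x n + b *\<^sub>R y n) = (\<lambda>n. a *\<^sub>R hatT T \<zeta> x n + b *\<^sub>R hatT T \<zeta> y n)"
    for x y a b
    by (simp add: hatT_def linear_add[OF linz] linear_scale[OF linz] linear_add[OF linT] linear_scale[OF linT])
  show "\<exists>C. \<forall>x\<in>Mb \<zeta>. supnorm (hatT T \<zeta> x) \<le> C * supnorm x"
  proof (intro exI ballI)
    fix x assume x: "x \<in> Mb \<zeta>"
    show "supnorm (hatT T \<zeta> x) \<le> K * supnorm x"
    proof (rule supnorm_least)
      fix n :: nat assume n: "1 \<le> n"
      have "norm (hatT T \<zeta> x n) \<le> norm (T (x n))" by (simp add: hatT_def normz)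
      also have "\<dots> \<le> norm (x n) * K" by (rule K(2))
      also have "\<dots> \<le> supnorm x * K"
        using supnorm_upper[OF MbD(3)[OF x] n] K(1) by (simp add: mult_right_mono)
      finally show "norm (hatT T \<zeta> x n) \<le> K * supnorm x" by (simp add: mult.commute)
    qed
  qed
qed

lemma sshift_Mb: assumes x: "x \<in> Mb \<zeta>" shows "sshift x \<in> Mb (Lshift \<zeta>)"
proof -
  obtain M where M: "\<And>n. norm (x n) \<le> M" using bounded_range_normD[OF MbD(3)[OF x]] by blast
  have M0: "0 \<le> M" using M[of 0] norm_ge_zero[of "x 0"] by linarith
  have b: "bounded (range (sshift x))"
    by (rule bounded_rangeI[where M = M]) (simp add: sshift_def M M0)
  show ?thesis unfolding Mb_def mem_Collect_eq
  proof (intro conjI allI impI)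
    show "sshift x 0 = 0" by (simp add: sshift_def)
    fix n m :: nat assume nm: "1 \<le> n \<and> n \<le> m"
    then show "Lshift \<zeta> n (sshift x m) = sshift x n"
      using MbD(2)[OF x, of "Suc n" "Suc m"] by (simp add: sshift_def Lshift_def)
  qed (rule b)
qed

lemma G7: "seq_bounded_op (Mb \<zeta>) (Mb (Lshift \<zeta>)) sshift"
  unfolding seq_bounded_op_def
proof (intro conjI ballI allI)
  show "sshift x \<in> Mb (Lshift \<zeta>)" if "x \<in> Mb \<zeta>" for x using that by (rule sshift_Mb)
  show "sshift (\<lambda>n. a *\<^sub>R x n + b *\<^sub>R y n) = (\<lambda>n. a *\<^sub>R sshift x n + b *\<^sub>R sshift y n)"
    for x y :: "nat \<Rightarrow> 'a" and a b
    by (simp add: sshift_def fun_eq_iff)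
  show "\<exists>C. \<forall>x\<in>Mb \<zeta>. supnorm (sshift x) \<le> C * supnorm x"
  proof (intro exI ballI)
    fix x assume x: "x \<in> Mb \<zeta>"
    show "supnorm (sshift x) \<le> 1 * supnorm x"
    proof (rule supnorm_least)
      fix n :: nat assume n: "1 \<le> n"
      then show "norm (sshift x n) \<le> 1 * supnorm x"
        using supnorm_upper[OF MbD(3)[OF x], of "Suc n"] by (simp add: sshift_def)
    qed
  qed
qed

lemma G8:
  assumes surj: "\<forall>y\<in>Mb \<zeta>. \<exists>x\<in>Mb \<zeta>. hatT T \<zeta> x = y"
  shows "\<forall>y\<in>Mb (Lshift \<zeta>). \<exists>x\<in>Mb (Lshift \<zeta>). hatT T (Lshift \<zeta>) x = y"
proof
  fix y assume y: "y \<in> Mb (Lshift \<zeta>)"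
  define y' where "y' n = (if n = 0 then 0 else if n = 1 then \<zeta> 1 (y 1) else y (n - 1))" for n
  have yc: "Lshift \<zeta> n (y m) = y n" if "1 \<le> n" "n \<le> m" for n m using MbD(2)[OF y that] .
  obtain M where M: "\<And>n. norm (y n) \<le> M" using bounded_range_normD[OF MbD(3)[OF y]] by blast
  have M0: "0 \<le> M" using M[of 0] norm_ge_zero[of "y 0"] by linarith
  have "y' \<in> Mb \<zeta>" unfolding Mb_def mem_Collect_eq
  proof (intro conjI allI impI)
    show "y' 0 = 0" by (simp add: y'_def)
    fix n m :: nat assume nm: "1 \<le> n \<and> n \<le> m"
    show "\<zeta> n (y' m) = y' n"
    proof (cases "n = 1")
      case True
      show ?thesis
      proof (cases "m = 1")
        case True
        then show ?thesis using \<open>n = 1\<close> by (simp add: y'_def idz)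
      next
        case False
        then have m2: "m \<ge> 2" using nm by simp
        have "y 1 = Lshift \<zeta> 1 (y (m - 1))" using yc[of 1 "m - 1"] m2 by simp
        then have "y 1 = \<zeta> (Suc (Suc 0)) (y (m - 1))" by (simp add: Lshift_def)
        then have "\<zeta> 1 (y 1) = \<zeta> 1 (y (m - 1))" by (simp add: compat)
        then show ?thesis using \<open>n = 1\<close> m2 by (simp add: y'_def)
      qed
    next
      case False
      then have n2: "n \<ge> 2" "m \<ge> 2" using nm by auto
      have "Lshift \<zeta> (n - 1) (y (m - 1)) = y (n - 1)" using yc[of "n - 1" "m - 1"] n2 nm by simp
      moreover have "Lshift \<zeta> (n - 1) = \<zeta> n" using n2 by (simp add: Lshift_def)
      ultimately show ?thesis using n2 by (simp add: y'_def)
    qed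
  next
    show "bounded (range y')"
    proof (rule bounded_rangeI[where M = M])
      fix n
      show "norm (y' n) \<le> M"
        using M[of 1] M[of "n - 1"] M0 normz[of 1 "y 1"] by (auto simp: y'_def)
    qed
  qed
  then obtain x where x: "x \<in> Mb \<zeta>" "hatT T \<zeta> x = y'" using surj by blast
  show "\<exists>x\<in>Mb (Lshift \<zeta>). hatT T (Lshift \<zeta>) x = y"
  proof (intro bexI)
    show "sshift x \<in> Mb (Lshift \<zeta>)" by (rule sshift_Mb[OF x(1)])
    have "hatT T (Lshift \<zeta>) (sshift x) = sshift y'" by (simp add: G2[symmetric] x(2))
    also have "\<dots> = y" using MbD(1)[OF y] by (auto simp: sshift_def y'_def fun_eq_iff)
    finally show "hatT T (Lshift \<zeta>) (sshift x) = y" .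
  qed
qed

end

lemma setting_Lshift: "setting B \<zeta> T \<Longrightarrow> setting B (Lshift \<zeta>) T"
  unfolding setting_def using ff_Lshift by blast

instantiation nat :: metric_space
begin

definition dist_nat :: "nat \<Rightarrow> nat \<Rightarrow> real" where "dist_nat m n = \<bar>real m - real n\<bar>"

definition uniformity_nat :: "(nat \<times> nat) filter"
  where "uniformity_nat = (INF e\<in>{0<..}. principal {(x, y). dist x y < e})"

instance
proof
  show "uniformity = (INF e\<in>{0<..}. principal {(x, y). dist (x::nat) y < e})"
    by (rule uniformity_nat_def)
  fix U :: "nat set"
  have "eventually (\<lambda>(x', y). x' = x \<longrightarrow> y \<in> U) uniformity" if "x \<in> U" for x
  proof -
    have le: "(uniformity :: (nat \<times> nat) filter) \<le> principal {(x, y). dist x y < 1}"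
      unfolding uniformity_nat_def by (rule INF_lower) simp
    have "eventually (\<lambda>(x', y). x' = x \<longrightarrow> y \<in> U) (principal {(x, y). dist (x::nat) y < 1})"
    proof (unfold eventually_principal, safe)
      fix b assume h: "dist x b < 1"
      have "real_of_int \<bar>int x - int b\<bar> < 1" using h by (simp add: dist_nat_def)
      then have "\<bar>int x - int b\<bar> < 1" by (simp only: of_int_less_1_iff)
      then have "b = x" by arith
      then show "b \<in> U" using that by simp
    qed
    then show ?thesis by (rule filter_leD[OF le])
  qed
  then show "open U = (\<forall>x\<in>U. eventually (\<lambda>(x', y). x' = x \<longrightarrow> y \<in> U) uniformity)"
    using open_discrete[of U] by blast
  fix x y z :: nat
  show "(dist x y = 0) = (x = y)" by (simp add: dist_nat_def)
  show "dist x y \<le> dist x z + dist y z" by (simp add: dist_nat_def)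
qed

end

instance bcontfun :: (metric_space, banach) banach ..

lemma bcf_mem: "bounded (range (x :: nat \<Rightarrow> 'b::metric_space)) \<Longrightarrow> x \<in> bcontfun"
  unfolding bcontfun_def by simp

lemma apply_Bcontfun: "bounded (range (x :: nat \<Rightarrow> 'b::metric_space)) \<Longrightarrow> apply_bcontfun (Bcontfun x) = x"
  by (rule Bcontfun_inverse[OF bcf_mem])

lemma supnorm_norm:
  fixes x :: "nat \<Rightarrow> 'b::real_normed_vector"
  assumes x0: "x 0 = 0" and b: "bounded (range x)"
  shows "supnorm x = norm (Bcontfun x)"
proof (rule antisym)
  have ap: "apply_bcontfun (Bcontfun x) = x" by (rule apply_Bcontfun[OF b])
  show "supnorm x \<le> norm (Bcontfun x)"
  proof (rule supnorm_least)
    fix n :: nat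
    show "norm (x n) \<le> norm (Bcontfun x)" using norm_bounded[of "Bcontfun x" n] by (simp add: ap)
  qed
  show "norm (Bcontfun x) \<le> supnorm x"
  proof (rule norm_bound)
    fix n
    show "norm (apply_bcontfun (Bcontfun x) n) \<le> supnorm x"
    proof (cases "n = 0")
      case True then show ?thesis using supnorm_nonneg[OF b] by (simp add: ap x0)
    next
      case False then show ?thesis using supnorm_upper[OF b, of n] by (simp add: ap)
    qed
  qed
qed

lemma Mb_scale:
  assumes ff: "forward_filtration B \<xi>" and bs: "boolean_subalgebra B" and x: "x \<in> Mb \<xi>"
  shows "(\<lambda>n. c *\<^sub>R x n) \<in> Mb \<xi>"
  using Mb_lin[OF ff bs x x, of c 0] by simp

context setting
begin

lemma G9:
  assumes surj: "\<forall>y\<in>Mb \<zeta>. \<exists>x\<in>Mb \<zeta>. hatT T \<zeta> x = y"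
  shows "seq_open_map (Mb \<zeta>) (hatT T \<zeta>)"
proof -
  define X where "X = {v :: nat \<Rightarrow>\<^sub>C 'a. apply_bcontfun v \<in> Mb \<zeta>}"
  define F where "F v = Bcontfun (hatT T \<zeta> (apply_bcontfun v))" for v :: "nat \<Rightarrow>\<^sub>C 'a"
  obtain K where K: "K > 0" "\<And>x. norm (T x) \<le> norm x * K" using Kex by blast
  have nb: "norm (hatT T \<zeta> (apply_bcontfun v) n) \<le> norm v * K" for v n
  proof -
    have "norm (hatT T \<zeta> (apply_bcontfun v) n) \<le> norm (T (apply_bcontfun v n))"
      by (simp add: hatT_def normz)
    also have "\<dots> \<le> norm (apply_bcontfun v n) * K" by (rule K(2))
    also have "\<dots> \<le> norm v * K" using norm_bounded[of v n] K(1) by (simp add: mult_right_mono)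
    finally show ?thesis .
  qed
  have hb: "bounded (range (hatT T \<zeta> (apply_bcontfun v)))" for v
    by (rule bounded_rangeI[where M = "norm v * K"]) (rule nb)
  have Fapp: "apply_bcontfun (F v) = hatT T \<zeta> (apply_bcontfun v)" for v
    unfolding F_def by (rule apply_Bcontfun[OF hb])
  have blF: "bounded_linear F"
  proof (rule bounded_linear_intro[where K = K])
    show "F (v + w) = F v + F w" for v w
      by (rule bcontfun_eqI) (simp add: Fapp hatT_def linear_add[OF linz] linear_add[OF linT])
    show "F (r *\<^sub>R v) = r *\<^sub>R F v" for r v
      by (rule bcontfun_eqI) (simp add: Fapp hatT_def linear_scale[OF linz] linear_scale[OF linT])
    show "norm (F v) \<le> norm v * K" for v
      by (rule norm_bound) (simp only: Fapp nb)
  qed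
  have pw: "(\<lambda>j. apply_bcontfun (s j) n) \<longlonglongrightarrow> apply_bcontfun l n"
    if "s \<longlonglongrightarrow> l" for s :: "nat \<Rightarrow> nat \<Rightarrow>\<^sub>C 'a" and l n
    by (rule metric_tendsto_imp_tendsto[OF that]) (intro always_eventually allI dist_bounded)
  have cX: "closed X"
    unfolding closed_sequential_limits
  proof (intro allI impI)
    fix s :: "nat \<Rightarrow> nat \<Rightarrow>\<^sub>C 'a" and l
    assume a: "(\<forall>n. s n \<in> X) \<and> s \<longlonglongrightarrow> l"
    then have sX: "\<And>j. apply_bcontfun (s j) \<in> Mb \<zeta>" and lim: "s \<longlonglongrightarrow> l"
      unfolding X_def by auto
    have "apply_bcontfun l \<in> Mb \<zeta>" unfolding Mb_def mem_Collect_eq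
    proof (intro conjI allI impI)
      have "(\<lambda>j. apply_bcontfun (s j) 0) \<longlonglongrightarrow> apply_bcontfun l 0" by (rule pw[OF lim])
      moreover have "(\<lambda>j. apply_bcontfun (s j) 0) = (\<lambda>j. 0)" using MbD(1)[OF sX] by simp
      ultimately have "(\<lambda>j. 0) \<longlonglongrightarrow> apply_bcontfun l 0" by simp
      then show "apply_bcontfun l 0 = 0" by (rule LIMSEQ_unique[OF tendsto_const, symmetric])
      fix n m :: nat assume nm: "1 \<le> n \<and> n \<le> m"
      have "(\<lambda>j. \<zeta> n (apply_bcontfun (s j) m)) \<longlonglongrightarrow> \<zeta> n (apply_bcontfun l m)"
        by (rule bounded_linear.tendsto[OF blz pw[OF lim]])
      moreover have "(\<lambda>j. \<zeta> n (apply_bcontfun (s j) m)) = (\<lambda>j. apply_bcontfun (s j) n)"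
        using MbD(2)[OF sX] nm by auto
      ultimately have "(\<lambda>j. apply_bcontfun (s j) n) \<longlonglongrightarrow> \<zeta> n (apply_bcontfun l m)" by simp
      then show "\<zeta> n (apply_bcontfun l m) = apply_bcontfun l n"
        by (rule LIMSEQ_unique[OF _ pw[OF lim]])
    qed simp
    then show "l \<in> X" unfolding X_def by simp
  qed
  have sX: "subspace X"
  proof (rule subspaceI)
    show "0 \<in> X" unfolding X_def using Mb_zero[OF ff bs] by simp
    show "v + w \<in> X" if "v \<in> X" "w \<in> X" for v w
      using that Mb_add[OF ff bs] unfolding X_def by simp
    show "c *\<^sub>R v \<in> X" if "v \<in> X" for c v
      using that Mb_scale[OF ff bs] unfolding X_def by simp
  qed
  have fX: "F ` X = X"
  proof
    show "F ` X \<subseteq> X" unfolding X_def by (auto simp: Fapp hatT_Mb)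
    show "X \<subseteq> F ` X"
    proof
      fix v assume v: "v \<in> X"
      then obtain x where x: "x \<in> Mb \<zeta>" "hatT T \<zeta> x = apply_bcontfun v"
        using surj unfolding X_def by blast
      have ax: "apply_bcontfun (Bcontfun x) = x" by (rule apply_Bcontfun[OF MbD(3)[OF x(1)]])
      have "Bcontfun x \<in> X" unfolding X_def using ax x(1) by simp
      moreover have "v = F (Bcontfun x)"
        unfolding F_def ax x(2) by (rule apply_bcontfun_inverse[symmetric])
      ultimately show "v \<in> F ` X" by (rule rev_image_eqI)
    qed
  qed
  obtain c where c: "c > 0" and cb: "\<And>y. y \<in> X \<Longrightarrow> \<exists>x\<in>X. F x = y \<and> norm x \<le> c * norm y"
    using omt_bound[OF blF cX sX fX] by blast
  show ?thesis unfolding seq_open_map_def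
  proof (intro allI impI ballI)
    fix U assume UM: "U \<subseteq> Mb \<zeta>"
      and Uo: "\<forall>u\<in>U. \<exists>e>0. \<forall>v\<in>Mb \<zeta>. supnorm (\<lambda>n. v n - u n) < e \<longrightarrow> v \<in> U"
    fix w assume "w \<in> hatT T \<zeta> ` U"
    then obtain u where u: "u \<in> U" "w = hatT T \<zeta> u" by blast
    have uM: "u \<in> Mb \<zeta>" using u UM by blast
    have wM: "w \<in> Mb \<zeta>" using u(2) hatT_Mb[OF uM] by simp
    obtain e where e: "e > 0" "\<And>v. v \<in> Mb \<zeta> \<Longrightarrow> supnorm (\<lambda>n. v n - u n) < e \<Longrightarrow> v \<in> U"
      using Uo u(1) by blast
    show "\<exists>d>0. \<forall>v\<in>Mb \<zeta>. supnorm (\<lambda>n. v n - w n) < d \<longrightarrow> v \<in> hatT T \<zeta> ` U"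
    proof (intro exI conjI ballI impI)
      show "e / c > 0" using e c by simp
      fix v assume vM: "v \<in> Mb \<zeta>" and vd: "supnorm (\<lambda>n. v n - w n) < e / c"
      define ys where "ys = (\<lambda>n. v n - w n)"
      have ysM: "ys \<in> Mb \<zeta>" unfolding ys_def by (rule Mb_diff[OF ff bs vM wM])
      have ays: "apply_bcontfun (Bcontfun ys) = ys" by (rule apply_Bcontfun[OF MbD(3)[OF ysM]])
      have "Bcontfun ys \<in> X" unfolding X_def using ays ysM by simp
      then obtain xv where xv: "xv \<in> X" "F xv = Bcontfun ys" "norm xv \<le> c * norm (Bcontfun ys)"
        using cb by blast
      define xs where "xs = apply_bcontfun xv"
      have xsM: "xs \<in> Mb \<zeta>" using xv(1) unfolding X_def xs_def by simp
      have hxs: "hatT T \<zeta> xs = ys"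
        using arg_cong[OF xv(2), of apply_bcontfun] unfolding Fapp ays xs_def .
      have nys: "norm (Bcontfun ys) = supnorm ys"
        by (rule supnorm_norm[OF MbD(1)[OF ysM] MbD(3)[OF ysM], symmetric])
      define u' where "u' = (\<lambda>n. u n + xs n)"
      have u'M: "u' \<in> Mb \<zeta>" unfolding u'_def by (rule Mb_add[OF ff bs uM xsM])
      have "supnorm (\<lambda>n. u' n - u n) = supnorm xs" by (simp add: u'_def)
      also have "\<dots> = norm (Bcontfun xs)" by (rule supnorm_norm[OF MbD(1)[OF xsM] MbD(3)[OF xsM]])
      also have "Bcontfun xs = xv" unfolding xs_def by (rule apply_bcontfun_inverse)
      also have "norm xv \<le> c * supnorm ys" using xv(3) nys by simp
      also have "\<dots> < c * (e / c)" unfolding ys_def by (rule mult_strict_left_mono[OF vd c])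
      also have "\<dots> = e" using c by simp
      finally have u'U: "u' \<in> U" using e(2)[OF u'M] by blast
      have hu': "hatT T \<zeta> u' = v"
      proof
        fix n
        have "hatT T \<zeta> u' n = hatT T \<zeta> u n + hatT T \<zeta> xs n"
          by (simp add: u'_def hatT_def linear_add[OF linz] linear_add[OF linT])
        also have "\<dots> = w n + ys n" by (simp add: hxs u(2))
        also have "\<dots> = v n" by (simp add: ys_def)
        finally show "hatT T \<zeta> u' n = v n" .
      qed
      show "v \<in> hatT T \<zeta> ` U" by (rule image_eqI[where f = "hatT T \<zeta>" and x = u', OF hu'[symmetric] u'U])
    qed
  qed
qed

end

lemma setting_pow: "setting B \<xi> T \<Longrightarrow> setting B ((Lshift ^^ k) \<xi>) T"
  by (induction k) (auto intro: setting_Lshift)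

lemma surj_pow:
  assumes "setting B \<xi> T" "\<forall>y\<in>Mb \<xi>. \<exists>x\<in>Mb \<xi>. hatT T \<xi> x = y"
  shows "\<forall>y\<in>Mb ((Lshift ^^ k) \<xi>). \<exists>x\<in>Mb ((Lshift ^^ k) \<xi>). hatT T ((Lshift ^^ k) \<xi>) x = y"
proof (induction k)
  case 0 then show ?case using assms(2) by simp
next
  case (Suc k)
  have "setting B ((Lshift ^^ k) \<xi>) T" by (rule setting_pow[OF assms(1)])
  from setting.G8[OF this Suc.IH] show ?case by simp
qed

theorem corollary4p7:
  fixes B :: "('a::banach_lattice \<Rightarrow> 'a) set"
    and \<xi> :: "nat \<Rightarrow> 'a \<Rightarrow> 'a"
    and T :: "'a \<Rightarrow> 'a"
  assumes "KB_space TYPE('a)"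
    and "boolean_subalgebra B"
    and "forward_filtration B \<xi>"
    and "volterra B T"
  shows "(\<forall>k::nat.
           (\<forall>x. iota ((Lshift ^^ k) \<xi>) (T x) = hatT T ((Lshift ^^ k) \<xi>) (iota ((Lshift ^^ k) \<xi>) x)) \<and>
           (\<forall>x\<in>Mb ((Lshift ^^ k) \<xi>).
              sshift (hatT T ((Lshift ^^ k) \<xi>) x) = hatT T ((Lshift ^^ Suc k) \<xi>) (sshift x)) \<and>
           (\<forall>x. sshift (iota ((Lshift ^^ k) \<xi>) x) = iota ((Lshift ^^ Suc k) \<xi>) x) \<and>
           bounded_linear T \<and>
           emb_bounded_op (Mb ((Lshift ^^ k) \<xi>)) (iota ((Lshift ^^ k) \<xi>)) \<and>
           seq_bounded_op (Mb ((Lshift ^^ k) \<xi>)) (Mb ((Lshift ^^ k) \<xi>)) (hatT T ((Lshift ^^ k) \<xi>)) \<and>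
           seq_bounded_op (Mb ((Lshift ^^ k) \<xi>)) (Mb ((Lshift ^^ Suc k) \<xi>)) sshift) \<and>
         ((\<forall>y\<in>Mb \<xi>. \<exists>x\<in>Mb \<xi>. hatT T \<xi> x = y) \<longrightarrow>
         (\<forall>k\<ge>1. seq_open_map (Mb ((Lshift ^^ k) \<xi>)) (hatT T ((Lshift ^^ k) \<xi>))))"
proof -
  have S0: "setting B \<xi> T" unfolding setting_def using assms(2-4) by blast
  have S: "setting B ((Lshift ^^ k) \<xi>) T" for k by (rule setting_pow[OF S0])
  have L: "(Lshift ^^ Suc k) \<xi> = Lshift ((Lshift ^^ k) \<xi>)" for k by simp
  show ?thesis
    apply (rule conjI)
     apply (rule allI)
    subgoal for k
      unfolding L
      by (intro conjI allI ballI setting.G1[OF S] setting.G2[OF S] setting.G3[OF S]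
          setting.blT[OF S] setting.G5[OF S] setting.G6[OF S] setting.G7[OF S])
    apply (intro impI allI)
    subgoal premises p for k
      by (rule setting.G9[OF S surj_pow[OF S0 p(1)]])
    done
qed

end
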